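(* Let $\varphi$ be a quantifier-free first-order formula in the language $\sigma^{bdo}_=$, and let $\varphi^{\circ}$ be the $\sigma^{bdbo}_=$-formula obtained from $\varphi$ by replacing every term of the form $\Diamond t$ by $t\circ 1$. Then $\varphi$ is satisfiable in some bdo if and only if $\varphi^{\circ}$ is satisfiable in some bdbo.
   Context: A bdo is an algebra $\langle A,\wedge,\vee,\Diamond,0,1,\leqslant\rangle$ where $\langle A,\wedge,\vee,0,1\rangle$ is a bounded distributive lattice with natural order $\leqslant$ and $\Diamond$ is unary with $\Diamond0=0$ and $\Diamond(x\vee y)=\Diamond x\vee\Diamond y$; $\sigma^{bdo}_=$ is its language with equality. A bdbo is an algebra $\langle A,\wedge,\vee,\circ,0,1,\leqslant\rangle$ where $\langle A,\wedge,\vee,0,1\rangle$ is a bounded distributive lattice with natural order $\leqslant$ and $\circ$ is binary with $x\circ0=0=0\circ x$, $x\circ(y\vee z)=(x\circ y)\vee(x\circ z)$, $(y\vee z)\circ x=(y\circ x)\vee(z\circ x)$; $\sigma^{bdbo}_=$ is its language with equality. A quantifier-free first-order formula is a Boolean combination of atomic formulas $s=t$, $s\leqslant t$; it is satisfiable in an algebra if true there under some valuation. *)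

theory Defs
  imports Main
begin

datatype 'v bdo_trm = BVar 'v | BMeet "'v bdo_trm" "'v bdo_trm" | BJoin "'v bdo_trm" "'v bdo_trm"
  | BDia "'v bdo_trm" | BZero | BOne

datatype 'v bdbo_trm = CVar 'v | CMeet "'v bdbo_trm" "'v bdbo_trm" | CJoin "'v bdbo_trm" "'v bdbo_trm"
  | CCirc "'v bdbo_trm" "'v bdbo_trm" | CZero | COne

datatype 't qf = FEq 't 't | FLe 't 't | FNot "'t qf" | FAnd "'t qf" "'t qf" | FOr "'t qf" "'t qf"

fun trans_trm :: "'v bdo_trm \<Rightarrow> 'v bdbo_trm" where
  "trans_trm (BVar x) = CVar x"
| "trans_trm (BMeet s t) = CMeet (trans_trm s) (trans_trm t)"
| "trans_trm (BJoin s t) = CJoin (trans_trm s) (trans_trm t)"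
| "trans_trm (BDia t) = CCirc (trans_trm t) COne"
| "trans_trm BZero = CZero"
| "trans_trm BOne = COne"

fun map_qf :: "('s \<Rightarrow> 't) \<Rightarrow> 's qf \<Rightarrow> 't qf" where
  "map_qf f (FEq s t) = FEq (f s) (f t)"
| "map_qf f (FLe s t) = FLe (f s) (f t)"
| "map_qf f (FNot p) = FNot (map_qf f p)"
| "map_qf f (FAnd p q) = FAnd (map_qf f p) (map_qf f q)"
| "map_qf f (FOr p q) = FOr (map_qf f p) (map_qf f q)"

definition trans_fm :: "'v bdo_trm qf \<Rightarrow> 'v bdbo_trm qf" where
  "trans_fm = map_qf trans_trm"

record 'a bdl =
  carrier :: "'a set"
  meet :: "'a \<Rightarrow> 'a \<Rightarrow> 'a"
  join :: "'a \<Rightarrow> 'a \<Rightarrow> 'a"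
  zero :: 'a
  one :: 'a

record 'a bdo_alg = "'a bdl" + dia :: "'a \<Rightarrow> 'a"
record 'a bdbo_alg = "'a bdl" + circ :: "'a \<Rightarrow> 'a \<Rightarrow> 'a"

definition lle :: "('a, 'b) bdl_scheme \<Rightarrow> 'a \<Rightarrow> 'a \<Rightarrow> bool" where
  "lle L x y \<longleftrightarrow> join L x y = y"

definition is_bdl :: "('a, 'b) bdl_scheme \<Rightarrow> bool" where
  "is_bdl L \<longleftrightarrow>
     zero L \<in> carrier L \<and> one L \<in> carrier L \<and>
     (\<forall>x\<in>carrier L. \<forall>y\<in>carrier L. meet L x y \<in> carrier L \<and> join L x y \<in> carrier L) \<and>
     (\<forall>x\<in>carrier L. \<forall>y\<in>carrier L.
        meet L x y = meet L y x \<and> join L x y = join L y x \<and>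
        meet L x (join L x y) = x \<and> join L x (meet L x y) = x) \<and>
     (\<forall>x\<in>carrier L. \<forall>y\<in>carrier L. \<forall>z\<in>carrier L.
        meet L x (meet L y z) = meet L (meet L x y) z \<and>
        join L x (join L y z) = join L (join L x y) z \<and>
        meet L x (join L y z) = join L (meet L x y) (meet L x z)) \<and>
     (\<forall>x\<in>carrier L. join L (zero L) x = x \<and> meet L (one L) x = x)"

definition is_bdo :: "'a bdo_alg \<Rightarrow> bool" where
  "is_bdo A \<longleftrightarrow> is_bdl A \<and>
     (\<forall>x\<in>carrier A. dia A x \<in> carrier A) \<and>
     dia A (zero A) = zero A \<and>
     (\<forall>x\<in>carrier A. \<forall>y\<in>carrier A. dia A (join A x y) = join A (dia A x) (dia A y))"

definition is_bdbo :: "'a bdbo_alg \<Rightarrow> bool" where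
  "is_bdbo B \<longleftrightarrow> is_bdl B \<and>
     (\<forall>x\<in>carrier B. \<forall>y\<in>carrier B. circ B x y \<in> carrier B) \<and>
     (\<forall>x\<in>carrier B. circ B x (zero B) = zero B \<and> circ B (zero B) x = zero B) \<and>
     (\<forall>x\<in>carrier B. \<forall>y\<in>carrier B. \<forall>z\<in>carrier B.
        circ B x (join B y z) = join B (circ B x y) (circ B x z) \<and>
        circ B (join B y z) x = join B (circ B y x) (circ B z x))"

fun eval_bdo :: "'a bdo_alg \<Rightarrow> ('v \<Rightarrow> 'a) \<Rightarrow> 'v bdo_trm \<Rightarrow> 'a" where
  "eval_bdo A v (BVar x) = v x"
| "eval_bdo A v (BMeet s t) = meet A (eval_bdo A v s) (eval_bdo A v t)"
| "eval_bdo A v (BJoin s t) = join A (eval_bdo A v s) (eval_bdo A v t)"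
| "eval_bdo A v (BDia t) = dia A (eval_bdo A v t)"
| "eval_bdo A v BZero = zero A"
| "eval_bdo A v BOne = one A"

fun eval_bdbo :: "'a bdbo_alg \<Rightarrow> ('v \<Rightarrow> 'a) \<Rightarrow> 'v bdbo_trm \<Rightarrow> 'a" where
  "eval_bdbo B v (CVar x) = v x"
| "eval_bdbo B v (CMeet s t) = meet B (eval_bdbo B v s) (eval_bdbo B v t)"
| "eval_bdbo B v (CJoin s t) = join B (eval_bdbo B v s) (eval_bdbo B v t)"
| "eval_bdbo B v (CCirc s t) = circ B (eval_bdbo B v s) (eval_bdbo B v t)"
| "eval_bdbo B v CZero = zero B"
| "eval_bdbo B v COne = one B"

fun holds :: "('a, 'b) bdl_scheme \<Rightarrow> ('t \<Rightarrow> 'a) \<Rightarrow> 't qf \<Rightarrow> bool" where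
  "holds L ev (FEq s t) = (ev s = ev t)"
| "holds L ev (FLe s t) = lle L (ev s) (ev t)"
| "holds L ev (FNot p) = (\<not> holds L ev p)"
| "holds L ev (FAnd p q) = (holds L ev p \<and> holds L ev q)"
| "holds L ev (FOr p q) = (holds L ev p \<or> holds L ev q)"

definition sat_in_bdo :: "'a bdo_alg \<Rightarrow> 'v bdo_trm qf \<Rightarrow> bool" where
  "sat_in_bdo A \<phi> \<longleftrightarrow> (\<exists>v. (\<forall>x. v x \<in> carrier A) \<and> holds A (eval_bdo A v) \<phi>)"

definition sat_in_bdbo :: "'a bdbo_alg \<Rightarrow> 'v bdbo_trm qf \<Rightarrow> bool" where
  "sat_in_bdbo B \<phi> \<longleftrightarrow> (\<exists>v. (\<forall>x. v x \<in> carrier B) \<and> holds B (eval_bdbo B v) \<phi>)"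

end

theory Submission
  imports Defs
begin

lemma holds_map:
  assumes "join L = join L'" "\<And>t. ev (f t) = ev' t"
  shows "holds L ev (map_qf f \<phi>) = holds L' ev' \<phi>"
  using assms by (induction \<phi>) (auto simp: lle_def)

definition toB :: "'a bdo_alg \<Rightarrow> 'a bdbo_alg" where
  "toB A = \<lparr>carrier = carrier A, meet = meet A, join = join A, zero = zero A, one = one A,
     circ = (\<lambda>x y. if y = zero A then zero A else dia A x)\<rparr>"

definition toA :: "'a bdbo_alg \<Rightarrow> 'a bdo_alg" where
  "toA B = \<lparr>carrier = carrier B, meet = meet B, join = join B, zero = zero B, one = one B,
     dia = (\<lambda>x. circ B x (one B))\<rparr>"

lemma bdl_zero_meet:
  assumes "is_bdl L" "y \<in> carrier L" shows "meet L (zero L) y = zero L"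
proof -
  have "meet L (zero L) (join L (zero L) y) = zero L" using assms unfolding is_bdl_def by blast
  moreover have "join L (zero L) y = y" using assms unfolding is_bdl_def by blast
  ultimately show ?thesis by simp
qed

lemma bdl_join_zero:
  assumes "is_bdl L" "y \<in> carrier L" "z \<in> carrier L" "join L y z = zero L"
  shows "y = zero L"
proof -
  have "meet L y (join L y z) = y" using assms unfolding is_bdl_def by blast
  hence "meet L y (zero L) = y" using assms by simp
  moreover have "meet L y (zero L) = meet L (zero L) y" using assms unfolding is_bdl_def by blast
  ultimately show ?thesis using bdl_zero_meet[OF assms(1,2)] by simp
qed

lemma bdl_one_zero:
  assumes "is_bdl L" "one L = zero L" "x \<in> carrier L" shows "x = zero L"
proof -
  have "meet L (one L) x = x" using assms unfolding is_bdl_def by blast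
  thus ?thesis using bdl_zero_meet[OF assms(1,3)] assms(2) by simp
qed

lemma is_bdl_toB: "is_bdl (toB A) = is_bdl A"
  by (simp add: is_bdl_def toB_def)

lemma is_bdl_toA: "is_bdl (toA B) = is_bdl B"
  by (simp add: is_bdl_def toA_def)

lemma toB_bdbo: assumes "is_bdo A" shows "is_bdbo (toB A)"
proof -
  have L: "is_bdl A" using assms by (simp add: is_bdo_def)
  have Z: "zero A \<in> carrier A" "\<forall>x\<in>carrier A. \<forall>y\<in>carrier A. join A x y \<in> carrier A"
    using L unfolding is_bdl_def by blast+
  show ?thesis unfolding is_bdbo_def
  proof (intro conjI ballI)
    show "is_bdl (toB A)" using L is_bdl_toB by blast
  next
    fix x y assume "x \<in> carrier (toB A)" "y \<in> carrier (toB A)"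
    thus "circ (toB A) x y \<in> carrier (toB A)" using assms Z by (auto simp: toB_def is_bdo_def)
  next
    fix x assume "x \<in> carrier (toB A)"
    show "circ (toB A) x (zero (toB A)) = zero (toB A)" by (simp add: toB_def)
    show "circ (toB A) (zero (toB A)) x = zero (toB A)" using assms by (simp add: toB_def is_bdo_def)
  next
    fix x y z assume xyz: "x \<in> carrier (toB A)" "y \<in> carrier (toB A)" "z \<in> carrier (toB A)"
    hence c: "x \<in> carrier A" "y \<in> carrier A" "z \<in> carrier A" by (auto simp: toB_def)
    have j0: "join A y z = zero A \<longleftrightarrow> y = zero A \<and> z = zero A"
    proof
      assume h: "join A y z = zero A"
      have "y = zero A" using bdl_join_zero[OF L c(2,3) h] .
      moreover have "join A z y = zero A" using h L c unfolding is_bdl_def by metis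
      hence "z = zero A" using bdl_join_zero[OF L c(3,2)] by blast
      ultimately show "y = zero A \<and> z = zero A" by blast
    next
      assume "y = zero A \<and> z = zero A"
      thus "join A y z = zero A" using L Z unfolding is_bdl_def by simp
    qed
    have jz: "\<And>w. w \<in> carrier A \<Longrightarrow> join A (zero A) w = w" using L unfolding is_bdl_def by blast
    have jz2: "\<And>w. w \<in> carrier A \<Longrightarrow> join A w (zero A) = w"
    proof -
      fix w assume "w \<in> carrier A"
      thus "join A w (zero A) = w" using jz[of w] L Z unfolding is_bdl_def by simp
    qed
    have dc: "dia A x \<in> carrier A" "dia A y \<in> carrier A" "dia A z \<in> carrier A"
      using assms c by (auto simp: is_bdo_def)
    have dd: "dia A (join A y z) = join A (dia A y) (dia A z)" using assms c by (auto simp: is_bdo_def)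
    have jxx: "join A (dia A x) (dia A x) = dia A x"
    proof -
      have "join A (dia A x) (meet A (dia A x) (join A (dia A x) (dia A x))) = dia A x"
        using L dc Z unfolding is_bdl_def by blast
      moreover have "meet A (dia A x) (join A (dia A x) (dia A x)) = dia A x"
        using L dc unfolding is_bdl_def by blast
      ultimately show ?thesis by simp
    qed
    show "circ (toB A) x (join (toB A) y z) = join (toB A) (circ (toB A) x y) (circ (toB A) x z)"
    proof (cases "y = zero A")
      case True thus ?thesis using j0 jz Z dc by (simp add: toB_def)
    next
      case F: False
      show ?thesis
      proof (cases "z = zero A")
        case True thus ?thesis using j0 jz2 F dc by (simp add: toB_def)
      next
        case False thus ?thesis using j0 jxx F by (simp add: toB_def)
      qed
    qed
    show "circ (toB A) (join (toB A) y z) x = join (toB A) (circ (toB A) y x) (circ (toB A) z x)"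
    proof (cases "x = zero A")
      case True thus ?thesis using jz Z by (simp add: toB_def)
    next
      case False thus ?thesis using dd by (simp add: toB_def)
    qed
  qed
qed

lemma toA_bdo: assumes "is_bdbo B" shows "is_bdo (toA B)"
proof -
  have "is_bdl B" "one B \<in> carrier B" using assms unfolding is_bdbo_def is_bdl_def by blast+
  moreover have "\<forall>x\<in>carrier B. \<forall>y\<in>carrier B. circ B x y \<in> carrier B"
    "\<forall>x\<in>carrier B. circ B (zero B) x = zero B"
    "\<forall>x\<in>carrier B. \<forall>y\<in>carrier B. \<forall>z\<in>carrier B.
        circ B (join B y z) x = join B (circ B y x) (circ B z x)"
    using assms unfolding is_bdbo_def by blast+
  ultimately show ?thesis unfolding is_bdo_def is_bdl_toA by (simp add: toA_def)
qed

lemma eval_toB: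
  assumes "is_bdo A" "\<forall>x. v x \<in> carrier A"
  shows "eval_bdbo (toB A) v (trans_trm t) = eval_bdo A v t \<and> eval_bdo A v t \<in> carrier A"
proof (induction t)
  case (BDia t)
  have L: "is_bdl A" using assms by (simp add: is_bdo_def)
  show ?case
  proof (cases "one A = zero A")
    case True
    have "eval_bdo A v t = zero A" using bdl_one_zero[OF L True] BDia by blast
    thus ?thesis using True BDia assms by (auto simp: toB_def is_bdo_def)
  next
    case False thus ?thesis using BDia assms by (auto simp: toB_def is_bdo_def)
  qed
qed (use assms in \<open>auto simp: toB_def is_bdo_def is_bdl_def\<close>)

lemma eval_toA:
  "eval_bdo (toA B) v t = eval_bdbo B v (trans_trm t)"
  by (induction t) (auto simp: toA_def)

theorem lemma5p4:
  fixes \<phi> :: "'v bdo_trm qf"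
  shows "(\<exists>A :: 'a bdo_alg. is_bdo A \<and> sat_in_bdo A \<phi>) \<longleftrightarrow>
         (\<exists>B :: 'a bdbo_alg. is_bdbo B \<and> sat_in_bdbo B (trans_fm \<phi>))"
proof
  assume "\<exists>A :: 'a bdo_alg. is_bdo A \<and> sat_in_bdo A \<phi>"
  then obtain A :: "'a bdo_alg" and v where A: "is_bdo A" "\<forall>x. v x \<in> carrier A"
    "holds A (eval_bdo A v) \<phi>" by (auto simp: sat_in_bdo_def)
  have "holds (toB A) (eval_bdbo (toB A) v) (trans_fm \<phi>)"
    unfolding trans_fm_def using A eval_toB[OF A(1,2)]
    by (subst holds_map[where L'=A and ev'="eval_bdo A v"]) (auto simp: toB_def)
  moreover have "\<forall>x. v x \<in> carrier (toB A)" using A by (simp add: toB_def)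
  ultimately show "\<exists>B :: 'a bdbo_alg. is_bdbo B \<and> sat_in_bdbo B (trans_fm \<phi>)"
    using toB_bdbo[OF A(1)] by (auto simp: sat_in_bdbo_def)
next
  assume "\<exists>B :: 'a bdbo_alg. is_bdbo B \<and> sat_in_bdbo B (trans_fm \<phi>)"
  then obtain B :: "'a bdbo_alg" and v where B: "is_bdbo B" "\<forall>x. v x \<in> carrier B"
    "holds B (eval_bdbo B v) (trans_fm \<phi>)" by (auto simp: sat_in_bdbo_def)
  have "holds (toA B) (eval_bdo (toA B) v) \<phi>"
    using B(3) unfolding trans_fm_def
    by (subst (asm) holds_map[where L'="toA B" and ev'="eval_bdo (toA B) v"]) (auto simp: toA_def eval_toA[symmetric])
  moreover have "\<forall>x. v x \<in> carrier (toA B)" using B by (simp add: toA_def)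
  ultimately show "\<exists>A :: 'a bdo_alg. is_bdo A \<and> sat_in_bdo A \<phi>"
    using toA_bdo[OF B(1)] by (auto simp: sat_in_bdo_def)
qed

end
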